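(* Assume (A1) and (A2). For all $x,v,\tilde x,\tilde v\in\mathbb R^d$, \[|H(x,v)-H(\tilde x,\tilde v)|\le C_{dH,1}\,r(x,\tilde x,v,\tilde v)+C_{dH,2}\,r(x,\tilde x,v,\tilde v)\Big(\sqrt{H(x,v)}+\sqrt{H(\tilde x,\tilde v)}\Big),\] where $C_{dH,1}=\frac{24|\nabla U(0)|}\alpha$ and $C_{dH,2}=\frac{24L_U}{\alpha\sqrt\lambda}+\frac{6(1-\gamma)+\lambda-3}{\alpha\sqrt\lambda}+2\sqrt3\max\big(1,\frac1{2\alpha}\big)$.
   Context: $U\in\mathcal C^1(\mathbb R^d)$. (A1): $U\ge0$ and there exist $\lambda>0$, $A\ge0$ with $\tfrac12\nabla U(x)\cdot x\ge\lambda(U(x)+|x|^2/4)-A$ for all $x$. (A2): $\nabla U$ is $L_U$-Lipschitz, $L_U>0$. Set $\gamma=\frac{\lambda}{2(\lambda+1)}$, $H(x,v)=24U(x)+(6(1-\gamma)+\lambda)|x|^2+12x\cdot v+12|v|^2$, $\alpha=L_U+\frac\lambda4$, and $r(x,\tilde x,v,\tilde v)=\alpha|x-\tilde x|+|x-\tilde x+v-\tilde v|$. *)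

theory Defs
  imports "HOL-Analysis.Analysis"
begin

definition gam :: "real \<Rightarrow> real" where
  "gam lam = lam / (2 * (lam + 1))"

definition Hfun :: "('a::euclidean_space \<Rightarrow> real) \<Rightarrow> real \<Rightarrow> 'a \<Rightarrow> 'a \<Rightarrow> real" where
  "Hfun U lam x v = 24 * U x + (6 * (1 - gam lam) + lam) * (norm x)\<^sup>2 + 12 * (x \<bullet> v) + 12 * (norm v)\<^sup>2"

definition rdist :: "real \<Rightarrow> 'a::euclidean_space \<Rightarrow> 'a \<Rightarrow> 'a \<Rightarrow> 'a \<Rightarrow> real" where
  "rdist \<alpha> x x' v v' = \<alpha> * norm (x - x') + norm (x - x' + v - v')"

end

theory Submission
  imports Defs
begin

lemma U_diff:
  fixes U :: "'a::euclidean_space \<Rightarrow> real" and gradU :: "'a \<Rightarrow> 'a"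
  assumes grad: "\<And>x. (U has_derivative (%h. gradU x \<bullet> h)) (at x)"
    and LL: "L \<ge> 0"
    and A2: "\<And>x y. norm (gradU x - gradU y) \<le> L * norm (x - y)"
  shows "\<bar>U x - U x'\<bar> \<le> (norm (gradU 0) + L * (norm x + norm x')) * norm (x - x')"
proof -
  let ?S = "closed_segment x' x"
  let ?B = "norm (gradU 0) + L * (norm x + norm x')"
  have sub: "?S \<subseteq> cball 0 (max (norm x) (norm x'))"
    by (rule closed_segment_subset) auto
  have "norm (U x - U x') \<le> ?B * norm (x - x')"
  proof (rule differentiable_bound[where f' = "\<lambda>y h. gradU y \<bullet> h"])
    show "convex ?S" by simp
    show "(U has_derivative (\<lambda>h. gradU y \<bullet> h)) (at y within ?S)" for y
      using grad has_derivative_at_withinI by blast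
    show "onorm (\<lambda>h. gradU y \<bullet> h) \<le> ?B" if y: "y \<in> ?S" for y
    proof (rule onorm_le)
      fix h
      have "y \<in> cball 0 (max (norm x) (norm x'))" using sub y by blast
      then have "norm y \<le> max (norm x) (norm x')" by simp
      moreover have "max (norm x) (norm x') \<le> norm x + norm x'"
        using norm_ge_zero[of x] norm_ge_zero[of x'] by (simp add: max_def)
      ultimately have ny: "norm y \<le> norm x + norm x'" by linarith
      have "norm (gradU y) \<le> norm (gradU 0) + norm (gradU y - gradU 0)"
        using norm_triangle_ineq[of "gradU 0" "gradU y - gradU 0"] by simp
      also have "\<dots> \<le> ?B" using A2[of y 0] mult_left_mono[OF ny LL]
        by simp
      finally have "norm (gradU y) \<le> ?B" .
      then show "norm (gradU y \<bullet> h) \<le> ?B * norm h"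
        using Cauchy_Schwarz_ineq2[of "gradU y" h]
          mult_right_mono[of "norm (gradU y)" ?B "norm h"]
        by simp
    qed
  qed auto
  then show ?thesis by simp
qed

lemma sq_diff: "\<bar>(norm (a::'a::real_normed_vector))\<^sup>2 - (norm b)\<^sup>2\<bar> \<le> norm (a - b) * (norm a + norm b)"
proof -
  have e: "(norm a)\<^sup>2 - (norm b)\<^sup>2 = (norm a - norm b) * (norm a + norm b)"
    by (simp add: power2_eq_square algebra_simps)
  have "\<bar>(norm a)\<^sup>2 - (norm b)\<^sup>2\<bar> = \<bar>norm a - norm b\<bar> * (norm a + norm b)"
    unfolding e abs_mult by simp
  also have "\<dots> \<le> norm (a - b) * (norm a + norm b)"
    by (rule mult_right_mono) (auto simp: norm_triangle_ineq3)
  finally show ?thesis .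
qed

theorem lemma2p7:
  fixes U :: "'a::euclidean_space \<Rightarrow> real" and gradU :: "'a \<Rightarrow> 'a"
    and lam A L\<^sub>U :: real
  assumes grad: "\<And>x. (U has_derivative (%h. gradU x \<bullet> h)) (at x)"
    and C1: "continuous_on UNIV gradU"
    and A1_nonneg: "\<And>x. U x \<ge> 0"
    and A1_lam: "lam > 0" and A1_A: "A \<ge> 0"
    and A1: "\<And>x. (1/2) * (gradU x \<bullet> x) \<ge> lam * (U x + (norm x)\<^sup>2 / 4) - A"
    and A2_L: "L\<^sub>U > 0"
    and A2: "\<And>x y. norm (gradU x - gradU y) \<le> L\<^sub>U * norm (x - y)"
  shows "\<forall>x v x' v'.
    let \<gamma> = gam lam; \<alpha> = L\<^sub>U + lam / 4;
        C1 = 24 * norm (gradU 0) / \<alpha>;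
        C2 = 24 * L\<^sub>U / (\<alpha> * sqrt lam) + (6 * (1 - \<gamma>) + lam - 3) / (\<alpha> * sqrt lam)
             + 2 * sqrt 3 * max 1 (1 / (2 * \<alpha>));
        r = rdist \<alpha> x x' v v'
    in \<bar>Hfun U lam x v - Hfun U lam x' v'\<bar>
       \<le> C1 * r + C2 * r * (sqrt (Hfun U lam x v) + sqrt (Hfun U lam x' v'))"
proof (intro allI)
  fix x v x' v' :: 'a
  define c where "c = 6 * (1 - gam lam) + lam - 3"
  define \<alpha> where "\<alpha> = L\<^sub>U + lam / 4"
  define M where "M = max 1 (1 / (2 * \<alpha>))"
  define r where "r = rdist \<alpha> x x' v v'"
  define z where "z = (1/2) *\<^sub>R x + v"
  define z' where "z' = (1/2) *\<^sub>R x' + v'"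
  define H where "H = Hfun U lam x v"
  define H' where "H' = Hfun U lam x' v'"
  define S where "S = sqrt H + sqrt H'"
  define g0 where "g0 = norm (gradU 0)"
  have apos: "\<alpha> > 0" using A1_lam A2_L by (simp add: \<alpha>_def)
  have gl: "gam lam \<le> 1/2" using A1_lam by (simp add: gam_def field_simps)
  have cge: "c \<ge> lam" using gl by (simp add: c_def)
  have Hform: "Hfun U lam y w = 24 * U y + c * (norm y)\<^sup>2 + 12 * (norm ((1/2) *\<^sub>R y + w))\<^sup>2"
    for y w :: 'a
    by (simp add: Hfun_def c_def power2_norm_eq_inner inner_add_left inner_add_right
        inner_commute algebra_simps)
  have Hlow: "lam * (norm y)\<^sup>2 \<le> Hfun U lam y w \<and> 12 * (norm ((1/2) *\<^sub>R y + w))\<^sup>2 \<le> Hfun U lam y w"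
    for y w :: 'a
    using Hform[of y w] A1_nonneg[of y] cge mult_right_mono[OF cge, of "(norm y)\<^sup>2"]
      mult_nonneg_nonneg[of c "(norm y)\<^sup>2"] A1_lam
      zero_le_power2[of "norm ((1/2) *\<^sub>R y + w)"]
    by (smt (verit) zero_le_power2)
  have nx: "norm y \<le> sqrt (Hfun U lam y w) / sqrt lam" for y w :: 'a
  proof -
    have "sqrt lam * norm y = sqrt (lam * (norm y)\<^sup>2)" by (simp add: real_sqrt_mult)
    also have "\<dots> \<le> sqrt (Hfun U lam y w)" using Hlow[of y w] by simp
    finally show ?thesis using A1_lam by (simp add: field_simps)
  qed
  have nz: "12 * norm ((1/2) *\<^sub>R y + w) \<le> 2 * sqrt 3 * sqrt (Hfun U lam y w)" for y w :: 'a
  proof -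
    define n where "n = norm ((1/2) *\<^sub>R y + w)"
    have n0: "n \<ge> 0" by (simp add: n_def)
    have s12: "sqrt 12 * sqrt 12 = (12::real)" by simp
    have "12 * n = sqrt 12 * (sqrt 12 * n)" using s12 by (simp add: mult.assoc[symmetric])
    also have "sqrt 12 * n = sqrt (12 * n\<^sup>2)" using n0 by (simp add: real_sqrt_mult)
    also have "sqrt (12 * n\<^sup>2) \<le> sqrt (Hfun U lam y w)" using Hlow[of y w] by (simp add: n_def)
    also have "sqrt (12::real) = sqrt (2\<^sup>2 * 3)" by simp
    also have "\<dots> = 2 * sqrt 3" by (simp only: real_sqrt_mult real_sqrt_abs)
    finally have "12 * n \<le> 2 * sqrt 3 * sqrt (Hfun U lam y w)" by simp
    then show ?thesis by (simp add: n_def)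
  qed
  have X: "norm x + norm x' \<le> S / sqrt lam"
    using nx[of x v] nx[of x' v'] by (simp add: S_def H_def H'_def add_divide_distrib)
  have Z: "12 * (norm z + norm z') \<le> 2 * sqrt 3 * S"
    using nz[of x v] nz[of x' v'] by (simp add: S_def H_def H'_def z_def z'_def algebra_simps)
  have "0 \<le> lam * (norm x)\<^sup>2" "0 \<le> lam * (norm x')\<^sup>2" using A1_lam by simp_all
  then have "H \<ge> 0" "H' \<ge> 0" using Hlow[of x v] Hlow[of x' v'] by (auto simp: H_def H'_def)
  then have Spos: "S \<ge> 0" by (simp add: S_def)
  have a_le: "norm (x - x') \<le> r / \<alpha>"
    using apos by (simp add: r_def rdist_def field_simps)
  have r0: "r \<ge> 0" using apos by (simp add: r_def rdist_def)
  have dz: "norm (z - z') \<le> M * r"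
  proof -
    have "z - z' = (x - x' + v - v') - (1/2) *\<^sub>R (x - x')"
      by (simp add: z_def z'_def euclidean_eq_iff[where 'a='a] inner_simps algebra_simps)
    then have "norm (z - z') \<le> norm (x - x' + v - v') + (1/2) * norm (x - x')"
      using norm_triangle_ineq4[of "x - x' + v - v'" "(1/2) *\<^sub>R (x - x')"] by simp
    also have "\<dots> \<le> M * norm (x - x' + v - v') + M * \<alpha> * norm (x - x')"
    proof -
      have m1: "1 \<le> M" by (simp add: M_def)
      have m2: "1/2 \<le> M * \<alpha>" using apos
        by (simp add: M_def field_simps max_def)
      show ?thesis
        using mult_right_mono[OF m1 norm_ge_zero[of "x - x' + v - v'"]]
          mult_right_mono[OF m2 norm_ge_zero[of "x - x'"]] by simp
    qed
    also have "\<dots> = M * r" by (simp add: r_def rdist_def algebra_simps)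
    finally show ?thesis .
  qed
  have dU: "\<bar>U x - U x'\<bar> \<le> (g0 + L\<^sub>U * (norm x + norm x')) * norm (x - x')"
    unfolding g0_def using U_diff[OF grad _ A2] A2_L by simp
  have dH: "\<bar>H - H'\<bar> \<le> 24 * \<bar>U x - U x'\<bar> + c * \<bar>(norm x)\<^sup>2 - (norm x')\<^sup>2\<bar>
      + 12 * \<bar>(norm z)\<^sup>2 - (norm z')\<^sup>2\<bar>"
  proof -
    have eq: "H - H' = 24 * (U x - U x') + c * ((norm x)\<^sup>2 - (norm x')\<^sup>2)
      + 12 * ((norm z)\<^sup>2 - (norm z')\<^sup>2)"
      by (simp add: H_def H'_def Hform z_def z'_def algebra_simps)
    moreover have "c \<ge> 0" using cge A1_lam by simp
    moreover have tr: "\<bar>p + q + s\<bar> \<le> \<bar>p\<bar> + \<bar>q\<bar> + \<bar>s\<bar>" for p q s :: real by arith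
    ultimately show ?thesis
      unfolding eq using tr[of "24 * (U x - U x')" "c * ((norm x)\<^sup>2 - (norm x')\<^sup>2)"
        "12 * ((norm z)\<^sup>2 - (norm z')\<^sup>2)"] by (simp only: abs_mult abs_of_nonneg)
  qed
  have cpos: "c \<ge> 0" using cge A1_lam by simp
  define a where "a = norm (x - x')"
  define Xn where "Xn = norm x + norm x'"
  have a0: "a \<ge> 0" and X0: "Xn \<ge> 0" by (auto simp: a_def Xn_def)
  have t1: "24 * \<bar>U x - U x'\<bar> \<le> 24 * g0 * (r / \<alpha>) + 24 * L\<^sub>U * (S / sqrt lam) * (r / \<alpha>)"
  proof -
    have "24 * \<bar>U x - U x'\<bar> \<le> 24 * g0 * a + 24 * L\<^sub>U * Xn * a"
      using dU by (simp add: a_def Xn_def algebra_simps)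
    also have "\<dots> \<le> 24 * g0 * (r / \<alpha>) + 24 * L\<^sub>U * (S / sqrt lam) * (r / \<alpha>)"
      using A2_L a_le X a0 X0 Spos A1_lam by (intro add_mono mult_mono mult_left_mono)
        (auto simp: a_def Xn_def g0_def)
    finally show ?thesis .
  qed
  have t2: "c * \<bar>(norm x)\<^sup>2 - (norm x')\<^sup>2\<bar> \<le> c * ((r / \<alpha>) * (S / sqrt lam))"
  proof -
    have "\<bar>(norm x)\<^sup>2 - (norm x')\<^sup>2\<bar> \<le> a * Xn" using sq_diff by (simp add: a_def Xn_def)
    also have "\<dots> \<le> (r / \<alpha>) * (S / sqrt lam)"
      using a_le X a0 X0 Spos A1_lam r0 apos by (intro mult_mono) (auto simp: a_def Xn_def)
    finally show ?thesis using cpos by (rule mult_left_mono)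
  qed
  have t3: "12 * \<bar>(norm z)\<^sup>2 - (norm z')\<^sup>2\<bar> \<le> (M * r) * (2 * sqrt 3 * S)"
  proof -
    have "12 * \<bar>(norm z)\<^sup>2 - (norm z')\<^sup>2\<bar> \<le> norm (z - z') * (12 * (norm z + norm z'))"
      using mult_left_mono[OF sq_diff[of z z'], of 12] by (simp add: algebra_simps)
    also have "\<dots> \<le> (M * r) * (2 * sqrt 3 * S)"
    proof (rule mult_mono)
      show "0 \<le> M * r" using r0 by (simp add: M_def)
    qed (use dz Z Spos in auto)
    finally show ?thesis .
  qed
  have fin: "\<bar>H - H'\<bar> \<le> 24 * g0 / \<alpha> * r + (24 * L\<^sub>U / (\<alpha> * sqrt lam) + c / (\<alpha> * sqrt lam)
             + 2 * sqrt 3 * M) * r * S"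
  proof -
    have "\<bar>H - H'\<bar> \<le> 24 * g0 * (r / \<alpha>) + 24 * L\<^sub>U * (S / sqrt lam) * (r / \<alpha>)
       + c * ((r / \<alpha>) * (S / sqrt lam)) + (M * r) * (2 * sqrt 3 * S)"
      using dH t1 t2 t3 by linarith
    also have "\<dots> = 24 * g0 / \<alpha> * r + (24 * L\<^sub>U / (\<alpha> * sqrt lam) + c / (\<alpha> * sqrt lam)
             + 2 * sqrt 3 * M) * r * S"
      by (simp add: field_simps)
    finally show ?thesis .
  qed
  show "let \<gamma> = gam lam; \<alpha> = L\<^sub>U + lam / 4;
        C1 = 24 * norm (gradU 0) / \<alpha>;
        C2 = 24 * L\<^sub>U / (\<alpha> * sqrt lam) + (6 * (1 - \<gamma>) + lam - 3) / (\<alpha> * sqrt lam)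
             + 2 * sqrt 3 * max 1 (1 / (2 * \<alpha>));
        r = rdist \<alpha> x x' v v'
    in \<bar>Hfun U lam x v - Hfun U lam x' v'\<bar>
       \<le> C1 * r + C2 * r * (sqrt (Hfun U lam x v) + sqrt (Hfun U lam x' v'))"
    using fin unfolding Let_def
    by (simp add: c_def \<alpha>_def M_def r_def H_def H'_def S_def g0_def)
qed

end
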